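(* For every integer $n\ge1$ there exists a graph $\mathcal{G}=(\mathcal{V},\mathcal{E})$ with $V=4n$ vertices (having a perfect matching) such that for any algorithm $\mathcal{A}$ which is $(\epsilon,\delta)$-differentially private on $\mathcal{G}$ and outputs a perfect matching of $\mathcal{G}$, there exist edge weights $w:\mathcal{E}\to\{0,1\}$ such that the expected weight of the matching $\mathcal{A}(w)$ exceeds the weight of the minimum-weight perfect matching by at least $\alpha=\frac{V}{4}\cdot\frac{1-(1+e^{\epsilon})\delta}{1+e^{2\epsilon}}$. In particular, for sufficiently small $\epsilon,\delta$, $\alpha\ge0.12\cdot V$.
   Context: Private edge weight model: for a graph $\mathcal{G}=(\mathcal{V},\mathcal{E})$, a weight function is $w:\mathcal{E}\to\mathbb{R}$. Two weight functions $w,w'$ are neighboring if $\sum_{e\in\mathcal{E}}|w(e)-w'(e)|\le1$. A randomized algorithm $\mathcal{A}$ on weight functions is $(\epsilon,\delta)$-differentially private on $\mathcal{G}$ if for all neighboring $w,w'$ and all sets $S$ of outputs, $\Pr[\mathcal{A}(w)\in S]\le e^{\epsilon}\Pr[\mathcal{A}(w')\in S]+\delta$. The weight of a matching is the sum of the weights of its edges. *)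

theory Defs
  imports "HOL-Probability.Probability"
begin

definition simple_graph :: "'v set \<Rightarrow> 'v set set \<Rightarrow> bool" where
  "simple_graph V E \<longleftrightarrow> finite V \<and> (\<forall>e\<in>E. e \<subseteq> V \<and> card e = 2)"

definition matching :: "'v set set \<Rightarrow> 'v set set \<Rightarrow> bool" where
  "matching E M \<longleftrightarrow> M \<subseteq> E \<and> (\<forall>e\<in>M. \<forall>f\<in>M. e \<noteq> f \<longrightarrow> e \<inter> f = {})"

definition perfect_matching :: "'v set \<Rightarrow> 'v set set \<Rightarrow> 'v set set \<Rightarrow> bool" where
  "perfect_matching V E M \<longleftrightarrow> matching E M \<and> \<Union>M = V"

text \<open>Weight functions w : E \<rightarrow> R, represented as total functions vanishing off E.\<close>
definition weight_fun :: "'v set set \<Rightarrow> ('v set \<Rightarrow> real) \<Rightarrow> bool" where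
  "weight_fun E w \<longleftrightarrow> (\<forall>e. e \<notin> E \<longrightarrow> w e = 0)"

definition neighboring :: "'v set set \<Rightarrow> ('v set \<Rightarrow> real) \<Rightarrow> ('v set \<Rightarrow> real) \<Rightarrow> bool" where
  "neighboring E w w' \<longleftrightarrow> (\<Sum>e\<in>E. \<bar>w e - w' e\<bar>) \<le> 1"

definition matching_weight :: "('v set \<Rightarrow> real) \<Rightarrow> 'v set set \<Rightarrow> real" where
  "matching_weight w M = (\<Sum>e\<in>M. w e)"

definition dp_on :: "'v set set \<Rightarrow> real \<Rightarrow> real \<Rightarrow> (('v set \<Rightarrow> real) \<Rightarrow> 'o pmf) \<Rightarrow> bool" where
  "dp_on E eps delta A \<longleftrightarrow>
     (\<forall>w w'. weight_fun E w \<and> weight_fun E w' \<and> neighboring E w w' \<longrightarrow>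
        (\<forall>S. measure_pmf.prob (A w) S \<le> exp eps * measure_pmf.prob (A w') S + delta))"

end

theory Submission
  imports Defs
begin

lemma part2:
  fixes n :: nat
  shows "\<exists>eps0 > 0. \<exists>delta0 > 0. \<forall>(eps::real) (delta::real).
               0 \<le> eps \<longrightarrow> eps < eps0 \<longrightarrow> 0 \<le> delta \<longrightarrow> delta < delta0 \<longrightarrow>
               real (4*n) / 4 * ((1 - (1 + exp eps) * delta) / (1 + exp (2*eps))) \<ge> 0.12 * real (4*n)"
proof (intro exI[of _ "1/100"] conjI exI[of _ "1/100"] allI impI)
  fix eps delta :: real
  assume a: "0 \<le> eps" "eps < 1/100" "0 \<le> delta" "delta < 1/100"
  have e1: "exp eps \<le> 1 + eps + eps^2" using exp_bound[of eps] a by auto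
  have e2: "exp (2*eps) \<le> 1 + 2*eps + (2*eps)^2" using exp_bound[of "2*eps"] a by auto
  have "eps*eps \<le> (1/100)*(1/100)" using a by (intro mult_mono) auto
  then have "eps^2 \<le> 1/10000" by (simp add: power2_eq_square)
  then have E1: "exp eps \<le> 102/100" using e1 a by linarith
  have E2: "exp (2*eps) \<le> 103/100" using e2 \<open>eps^2 \<le> 1/10000\<close> a by (simp add: power_mult_distrib)
  have "(1 + exp eps) * delta \<le> (1 + 102/100) * (1/100)"
    using E1 a by (intro mult_mono) auto
  note Y = this
  have gen: "X \<le> 12/100*4*(1+103/100) \<Longrightarrow> Y \<le> (1 + 102/100) * (1/100) \<Longrightarrow> X \<le> 1 - Y" for X Y :: real by simp
  have X: "12/100 * 4 * (1 + exp (2*eps)) \<le> 12/100*4*(1+103/100)" using E2 by simp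
  have num: "1 - (1 + exp eps) * delta \<ge> 12/100 * 4 * (1 + exp (2*eps))" by (rule gen[OF X Y])
  have pos: "1 + exp (2*eps) > 0" by (smt (verit) exp_gt_zero)
  have "(1 - (1 + exp eps) * delta) / (1 + exp (2*eps)) \<ge> 12/100 * 4"
    using num pos by (simp add: pos_le_divide_eq)
  then have "real n * ((1 - (1 + exp eps) * delta) / (1 + exp (2*eps))) \<ge> real n * (12/100*4)"
    by (intro mult_left_mono) auto
  then show "real (4*n) / 4 * ((1 - (1 + exp eps) * delta) / (1 + exp (2*eps))) \<ge> 0.12 * real (4*n)"
    by simp
qed auto

definition ed :: "nat \<Rightarrow> bool \<Rightarrow> nat set" where
  "ed i b = (if b then {4*i+1, 4*i+2} else {4*i, 4*i+1})"
definition pm :: "nat \<Rightarrow> bool \<Rightarrow> nat set set" where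
  "pm i b = (if b then {{4*i, 4*i+1}, {4*i+2, 4*i+3}} else {{4*i+1, 4*i+2}, {4*i+3, 4*i}})"
definition cyc :: "nat \<Rightarrow> nat set set" where
  "cyc i = {{4*i, 4*i+1}, {4*i+1, 4*i+2}, {4*i+2, 4*i+3}, {4*i+3, 4*i}}"
definition GE :: "nat \<Rightarrow> nat set set" where "GE n = (\<Union>i<n. cyc i)"
definition Ms :: "nat \<Rightarrow> (nat \<Rightarrow> bool) \<Rightarrow> nat set set" where "Ms n s = (\<Union>i<n. pm i (s i))"

lemma cyc_div: "e \<in> cyc i \<Longrightarrow> x \<in> e \<Longrightarrow> x div 4 = i"
proof -
  assume "e \<in> cyc i" "x \<in> e"
  then have "x = 4*i \<or> x = 4*i+1 \<or> x = 4*i+2 \<or> x = 4*i+3" unfolding cyc_def by blast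
  then show ?thesis by presburger
qed

lemma pm_cyc: "pm i b \<subseteq> cyc i" unfolding pm_def cyc_def by auto
lemma ed_cyc: "ed i b \<in> cyc i" unfolding ed_def cyc_def by auto
lemma neqI': "x \<in> A \<Longrightarrow> x \<notin> B \<Longrightarrow> A \<noteq> B" by auto
lemma ed_pm: "ed i b \<notin> pm i b"
proof (cases b)
  case True
  have "{4*i+1, 4*i+2} \<noteq> {4*i, 4*i+1}" by (rule neqI'[of "4*i+2"]) auto
  moreover have "{4*i+1, 4*i+2} \<noteq> {4*i+2, 4*i+3}" by (rule neqI'[of "4*i+1"]) auto
  ultimately show ?thesis using True unfolding ed_def pm_def by simp
next
  case False
  have "{4*i, 4*i+1} \<noteq> {4*i+1, 4*i+2}" by (rule neqI'[of "4*i"]) auto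
  moreover have "{4*i, 4*i+1} \<noteq> {4*i+3, 4*i}" by (rule neqI'[of "4*i+1"]) auto
  ultimately show ?thesis using False unfolding ed_def pm_def by simp
qed
lemma ed_inj: "ed i b = ed j c \<Longrightarrow> i = j \<and> b = c"
proof -
  assume h: "ed i b = ed j c"
  have "4*i+1 \<in> ed i b" unfolding ed_def by simp
  then have "4*i+1 \<in> ed j c" using h by simp
  then have ij: "i = j" using cyc_div[OF ed_cyc] by fastforce
  have "{4*i+1, 4*i+2} \<noteq> {4*i, 4*i+1}" by (rule neqI'[of "4*i+2"]) auto
  then have "b = c" using h ij unfolding ed_def by (cases b; cases c) auto
  then show ?thesis using ij by simp
qed

lemma GE_simple: "simple_graph {..<4*n} (GE n)"
  unfolding simple_graph_def GE_def cyc_def by auto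

lemma Ms_sub: "Ms n s \<subseteq> GE n"
  unfolding Ms_def GE_def using pm_cyc by blast

lemma pm_disj:
  assumes "e \<in> pm i b" "f \<in> pm i b" "e \<noteq> f" shows "e \<inter> f = {}"
proof -
  have d1: "{4*i, 4*i+1} \<inter> {4*i+2, 4*i+3} = ({}::nat set)" by auto
  have d2: "{4*i+1, 4*i+2} \<inter> {4*i+3, 4*i} = ({}::nat set)" by auto
  show ?thesis
  proof (cases b)
    case True
    then have "e = {4*i, 4*i+1} \<or> e = {4*i+2, 4*i+3}" "f = {4*i, 4*i+1} \<or> f = {4*i+2, 4*i+3}"
      using assms unfolding pm_def by auto
    then show ?thesis using d1 assms(3) by (metis inf_commute)
  next
    case False
    then have "e = {4*i+1, 4*i+2} \<or> e = {4*i+3, 4*i}" "f = {4*i+1, 4*i+2} \<or> f = {4*i+3, 4*i}"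
      using assms unfolding pm_def by auto
    then show ?thesis using d2 assms(3) by (metis inf_commute)
  qed
qed

lemma Ms_pm: "perfect_matching {..<4*n} (GE n) (Ms n s)"
  unfolding perfect_matching_def matching_def
proof (intro conjI ballI impI)
  show "Ms n s \<subseteq> GE n" by (rule Ms_sub)
next
  fix e f assume e: "e \<in> Ms n s" and f: "f \<in> Ms n s" and ne: "e \<noteq> f"
  obtain i where i: "e \<in> pm i (s i)" using e unfolding Ms_def by auto
  obtain j where j: "f \<in> pm j (s j)" using f unfolding Ms_def by auto
  show "e \<inter> f = {}"
  proof (cases "i = j")
    case True
    then show ?thesis using pm_disj[OF i _ ne] j by simp
  next
    case False
    have "False" if "x \<in> e" "x \<in> f" for x
    proof -
      have "x div 4 = i" by (rule cyc_div[OF subsetD[OF pm_cyc i] that(1)])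
      moreover have "x div 4 = j" by (rule cyc_div[OF subsetD[OF pm_cyc j] that(2)])
      ultimately show False using False by simp
    qed
    then show ?thesis by blast
  qed
next
  show "\<Union>(Ms n s) = {..<4*n}"
  proof
    show "\<Union>(Ms n s) \<subseteq> {..<4*n}" using Ms_sub GE_simple unfolding simple_graph_def by blast
  next
    show "{..<4*n} \<subseteq> \<Union>(Ms n s)"
    proof
      fix x assume x: "x \<in> {..<4*n}"
      define i where "i = x div 4"
      have il: "i < n" using x unfolding i_def by auto
      have "x = 4*i \<or> x = 4*i+1 \<or> x = 4*i+2 \<or> x = 4*i+3" unfolding i_def by presburger
      then have "x \<in> \<Union>(pm i (s i))" unfolding pm_def by (cases "s i") auto
      then show "x \<in> \<Union>(Ms n s)" using il unfolding Ms_def by blast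
    qed
  qed
qed

lemma cover:
  assumes "perfect_matching {..<4*n} (GE n) M" "i < n"
  shows "ed i False \<in> M \<or> ed i True \<in> M"
proof -
  have "4*i+1 \<in> \<Union>M" using assms unfolding perfect_matching_def by auto
  then obtain e where e: "e \<in> M" "4*i+1 \<in> e" by auto
  then have "e \<in> GE n" using assms unfolding perfect_matching_def matching_def by auto
  then obtain j where j: "e \<in> cyc j" unfolding GE_def by auto
  have "j = i" using cyc_div[OF j e(2)] by simp
  then have "e = {4*i, 4*i+1} \<or> e = {4*i+1, 4*i+2} \<or> e = {4*i+2, 4*i+3} \<or> e = {4*i+3, 4*i}"
    using j unfolding cyc_def by blast
  moreover have "4*i+1 \<notin> {4*i+2, 4*i+3}" "4*i+1 \<notin> {4*i+3, 4*i}" by auto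
  ultimately have "e = ed i False \<or> e = ed i True" using e(2) unfolding ed_def by auto
  then show ?thesis using e by auto
qed

lemma ed_notin_Ms: "j < n \<Longrightarrow> ed j (s j) \<notin> Ms n s"
proof
  assume j: "j < n" and h: "ed j (s j) \<in> Ms n s"
  then obtain i where i: "ed j (s j) \<in> pm i (s i)" unfolding Ms_def by auto
  have "4*j+1 \<in> ed j (s j)" unfolding ed_def by auto
  then have "(4*j+1) div 4 = i" by (rule cyc_div[OF subsetD[OF pm_cyc i]])
  then have "i = j" by simp
  then show False using i ed_pm by auto
qed


definition D :: "nat \<Rightarrow> (nat \<Rightarrow> bool) \<Rightarrow> nat set set" where "D n s = (\<lambda>i. ed i (s i)) ` {..<n}"
definition W :: "nat set set \<Rightarrow> nat set \<Rightarrow> real" where "W A e = (if e \<in> A then 1 else 0)"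

lemma GE_finite: "finite (GE n)" unfolding GE_def cyc_def by (intro finite_UN_I) simp_all

lemma D_sub: "D n s \<subseteq> GE n" unfolding D_def GE_def using ed_cyc by blast

lemma inj_ed: "inj_on (\<lambda>i. ed i (s i)) A"
  by (rule inj_onI) (use ed_inj in blast)

lemma mw:
  assumes M: "perfect_matching {..<4*n} (GE n) M"
  shows "matching_weight (W (D n s)) M = (\<Sum>i<n. indicator {M. ed i (s i) \<in> M} M)"
proof -
  have "M \<subseteq> GE n" using M unfolding perfect_matching_def matching_def by (elim conjE)
  then have fM: "finite M" using GE_finite by (rule finite_subset)
  have fD: "finite (D n s)" unfolding D_def by simp
  have "matching_weight (W (D n s)) M = (\<Sum>e\<in>M. if e \<in> D n s then 1 else 0)"
    unfolding matching_weight_def W_def by (rule refl)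
  also have "\<dots> = (\<Sum>e\<in>M \<inter> D n s. 1)" using sum.inter_restrict[OF fM, of "\<lambda>_. 1::real" "D n s"] by simp
  also have "\<dots> = (\<Sum>e\<in>D n s \<inter> M. 1)" by (simp only: Int_commute)
  also have "\<dots> = (\<Sum>e\<in>D n s. if e \<in> M then 1 else 0)" using sum.inter_restrict[OF fD, of "\<lambda>_. 1::real" M] by simp
  also have "\<dots> = (\<Sum>i<n. if ed i (s i) \<in> M then 1 else 0)"
    unfolding D_def by (subst sum.reindex[OF inj_ed]) (simp only: comp_def)
  also have "\<dots> = (\<Sum>i<n. indicator {M. ed i (s i) \<in> M} M)" unfolding indicator_def by (rule sum.cong) simp_all
  finally show ?thesis .
qed





lemma expect_eq:
  assumes supp: "set_pmf p \<subseteq> {M. perfect_matching {..<4*n} (GE n) M}"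
  shows "measure_pmf.expectation p (matching_weight (W (D n s))) = (\<Sum>i<n. measure_pmf.prob p {M. ed i (s i) \<in> M})"
proof -
  have "measure_pmf.expectation p (matching_weight (W (D n s))) =
        measure_pmf.expectation p (\<lambda>M. \<Sum>i<n. indicator {M. ed i (s i) \<in> M} M)"
  proof (rule integral_cong_AE)
    show "AE M in measure_pmf p. matching_weight (W (D n s)) M = (\<Sum>i<n. indicator {M. ed i (s i) \<in> M} M)"
    proof (rule AE_pmfI)
      fix M assume "M \<in> set_pmf p"
      then have "perfect_matching {..<4*n} (GE n) M" using supp by blast
      then show "matching_weight (W (D n s)) M = (\<Sum>i<n. indicator {M. ed i (s i) \<in> M} M)" by (rule mw)
    qed
  qed simp_all
  also have "\<dots> = (\<Sum>i<n. measure_pmf.prob p {M. ed i (s i) \<in> M})"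
    by (subst Bochner_Integration.integral_sum) (auto intro!: Bochner_Integration.integrable_real_indicator simp: measure_pmf.emeasure_finite less_top[symmetric])
  finally show ?thesis .
qed

lemma neighb:
  assumes "finite E"
  shows "neighboring E (W A) (W (A - {x}))" "neighboring E (W (A - {x})) (W A)"
proof -
  have le: "\<bar>W A e - W (A - {x}) e\<bar> \<le> (if e = x then 1 else 0)" for e
    unfolding W_def by auto
  have "(\<Sum>e\<in>E. \<bar>W A e - W (A - {x}) e\<bar>) \<le> (\<Sum>e\<in>E. if e = x then 1 else 0)"
    by (rule sum_mono) (rule le)
  also have "\<dots> \<le> 1" using assms by (simp add: sum.delta)
  finally have *: "(\<Sum>e\<in>E. \<bar>W A e - W (A - {x}) e\<bar>) \<le> 1" .
  then show "neighboring E (W A) (W (A - {x}))" unfolding neighboring_def .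
  have "(\<Sum>e\<in>E. \<bar>W (A - {x}) e - W A e\<bar>) = (\<Sum>e\<in>E. \<bar>W A e - W (A - {x}) e\<bar>)"
    by (rule sum.cong) (simp_all add: abs_minus_commute)
  then show "neighboring E (W (A - {x})) (W A)" unfolding neighboring_def using * by simp
qed

lemma wfW: "A \<subseteq> E \<Longrightarrow> weight_fun E (W A)"
  unfolding weight_fun_def W_def by auto

lemma group:
  assumes dp: "dp_on E eps delta Alg"
    and w: "weight_fun E w1" "weight_fun E w2" "weight_fun E w3"
    and nb: "neighboring E w1 w2" "neighboring E w2 w3"
  shows "measure_pmf.prob (Alg w1) S \<le> exp (2*eps) * measure_pmf.prob (Alg w3) S + (1 + exp eps) * delta"
proof -
  have a: "measure_pmf.prob (Alg w1) S \<le> exp eps * measure_pmf.prob (Alg w2) S + delta"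
    using dp w nb unfolding dp_on_def by blast
  have b: "measure_pmf.prob (Alg w2) S \<le> exp eps * measure_pmf.prob (Alg w3) S + delta"
    using dp w nb unfolding dp_on_def by blast
  have "exp eps * measure_pmf.prob (Alg w2) S \<le> exp eps * (exp eps * measure_pmf.prob (Alg w3) S + delta)"
    using b by (intro mult_left_mono) auto
  moreover have "exp (2*eps) = exp eps * exp eps" by (simp add: exp_add[symmetric])
  ultimately show ?thesis using a by (simp add: algebra_simps)
qed

lemma Dflip:
  assumes "i < n"
  shows "D n s - {ed i (s i)} = D n (s(i := b)) - {ed i b}"
proof -
  have 1: "D n s - {ed i (s i)} = (\<lambda>j. ed j (s j)) ` ({..<n} - {i})"
    unfolding D_def using ed_inj by blast
  have 2: "D n (s(i := b)) - {ed i b} = (\<lambda>j. ed j ((s(i := b)) j)) ` ({..<n} - {i})"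
    unfolding D_def using ed_inj by (auto simp del: fun_upd_apply) (auto split: if_splits)
  have 3: "(\<lambda>j. ed j ((s(i := b)) j)) ` ({..<n} - {i}) = (\<lambda>j. ed j (s j)) ` ({..<n} - {i})"
    by (rule image_cong) auto
  show ?thesis using 1 2 3 by simp
qed


definition X :: "((nat set \<Rightarrow> real) \<Rightarrow> nat set set pmf) \<Rightarrow> nat \<Rightarrow> (nat \<Rightarrow> bool) \<Rightarrow> nat \<Rightarrow> real" where
  "X Alg n s i = measure_pmf.prob (Alg (W (D n s))) {M. ed i (s i) \<in> M}"

lemma pair:
  assumes dp: "dp_on (GE n) eps delta Alg"
    and supp: "\<forall>w. weight_fun (GE n) w \<longrightarrow> set_pmf (Alg w) \<subseteq> {M. perfect_matching {..<4*n} (GE n) M}"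
    and i: "i < n"
  shows "X Alg n s i + exp (2*eps) * X Alg n (s(i := \<not> s i)) i \<ge> 1 - (1 + exp eps) * delta"
proof -
  define s' where "s' = s(i := \<not> s i)"
  define p where "p = Alg (W (D n s))"
  have wf: "weight_fun (GE n) (W (D n s))" by (rule wfW[OF D_sub])
  have sp: "set_pmf p \<subseteq> {M. perfect_matching {..<4*n} (GE n) M}" using supp wf unfolding p_def by blast
  define T1 where "T1 = {M. ed i (s i) \<in> (M::nat set set)}"
  define T2 where "T2 = {M. ed i (\<not> s i) \<in> (M::nat set set)}"
  have "measure_pmf.prob p (T1 \<union> T2) = 1"
  proof (subst measure_pmf.prob_eq_1)
    show "AE x in measure_pmf p. x \<in> T1 \<union> T2"
    proof (rule AE_pmfI)
      fix M assume "M \<in> set_pmf p"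
      then have "perfect_matching {..<4*n} (GE n) M" using sp by blast
      from cover[OF this i] show "M \<in> T1 \<union> T2" unfolding T1_def T2_def by (cases "s i") auto
    qed
  qed simp
  moreover have "measure_pmf.prob p (T1 \<union> T2) \<le> measure_pmf.prob p T1 + measure_pmf.prob p T2"
    by (rule measure_subadditive) (simp_all add: measure_pmf.emeasure_finite)
  ultimately have u: "1 \<le> measure_pmf.prob p T1 + measure_pmf.prob p T2" by simp
  have wf2: "weight_fun (GE n) (W (D n s - {ed i (s i)}))" by (rule wfW) (use D_sub in blast)
  have wf3: "weight_fun (GE n) (W (D n s'))" by (rule wfW[OF D_sub])
  have eqD: "D n s - {ed i (s i)} = D n s' - {ed i (s' i)}" unfolding s'_def using Dflip[OF i, of s "\<not> s i"] by simp
  have h1: "measure_pmf.prob p T2 \<le> exp (2*eps) * measure_pmf.prob (Alg (W (D n s'))) T2 + (1 + exp eps) * delta"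
    unfolding p_def
  proof (rule group[OF dp wf wf2 wf3])
    show "neighboring (GE n) (W (D n s)) (W (D n s - {ed i (s i)}))" by (rule neighb(1)[OF GE_finite])
    show "neighboring (GE n) (W (D n s - {ed i (s i)})) (W (D n s'))"
      unfolding eqD by (rule neighb(2)[OF GE_finite])
  qed
  have h2: "measure_pmf.prob (Alg (W (D n s'))) T2 = X Alg n s' i"
    unfolding X_def T2_def s'_def by simp
  have h3: "measure_pmf.prob p T1 = X Alg n s i" unfolding X_def T1_def p_def by simp
  have h4: "measure_pmf.prob p T2 \<le> exp (2*eps) * X Alg n s' i + (1 + exp eps) * delta"
    using h1 unfolding h2 .
  show ?thesis using u h3 h4 unfolding s'_def by linarith
qed


lemma sumlem: "(\<Sum>s\<in>S. (k::real) * (f s + g s)) = k * (sum f S + sum g S)"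
  by (simp add: sum_distrib_left sum.distrib distrib_left)

lemma halfl: "(a::real) * (2 * b) \<le> 2 * y \<Longrightarrow> a * b \<le> y"
  by linarith

lemma avg:
  assumes dp: "dp_on (GE n) eps delta Alg"
    and supp: "\<forall>w. weight_fun (GE n) w \<longrightarrow> set_pmf (Alg w) \<subseteq> {M. perfect_matching {..<4*n} (GE n) M}"
  shows "\<exists>s. (\<Sum>i<n. X Alg n s i) \<ge> real n * ((1 - (1 + exp eps) * delta) / (1 + exp (2*eps)))"
proof -
  define S where "S = PiE {..<n} (\<lambda>_. UNIV :: bool set)"
  define K where "K = exp (2*eps)"
  define c where "c = (1 + exp eps) * delta"
  define B where "B = (1 - c) / (1 + K)"
  have fS: "finite S" unfolding S_def by (rule finite_PiE) simp_all
  have neS: "S \<noteq> {}" unfolding S_def by (simp add: PiE_eq_empty_iff)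
  have Kpos: "1 + K > 0" unfolding K_def by (smt (verit) exp_gt_zero)
  have per_i: "(\<Sum>s\<in>S. X Alg n s i) \<ge> real (card S) * B" if i: "i < n" for i
  proof -
    define fl where "fl = (\<lambda>s::nat \<Rightarrow> bool. s(i := \<not> s i))"
    have flS: "fl s \<in> S" if "s \<in> S" for s
      using that i unfolding S_def fl_def by (auto simp: PiE_iff extensional_def)
    have flfl: "fl (fl s) = s" for s unfolding fl_def by simp
    have re: "(\<Sum>s\<in>S. X Alg n (fl s) i) = (\<Sum>s\<in>S. X Alg n s i)"
      by (rule sum.reindex_bij_witness[of S fl fl]) (simp_all add: flfl flS)
    have pt: "(1 + K) * (X Alg n s i + X Alg n (fl s) i) \<ge> 2 * (1 - c)" for s
    proof -
      have a: "X Alg n s i + K * X Alg n (fl s) i \<ge> 1 - c"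
        using pair[OF dp supp i, of s] unfolding K_def c_def fl_def .
      have b: "X Alg n (fl s) i + K * X Alg n (fl (fl s)) i \<ge> 1 - c"
        using pair[OF dp supp i, of "fl s"] unfolding K_def c_def fl_def .
      have e: "(1 + K) * (X Alg n s i + X Alg n (fl s) i) = (X Alg n s i + K * X Alg n (fl s) i) + (X Alg n (fl s) i + K * X Alg n s i)"
        by (simp add: algebra_simps)
      show ?thesis using add_mono[OF a b[unfolded flfl]] unfolding e by simp
    qed
    have "real (card S) * (2 * (1 - c)) = (\<Sum>s\<in>S. 2 * (1 - c))" by simp
    also have "\<dots> \<le> (\<Sum>s\<in>S. (1 + K) * (X Alg n s i + X Alg n (fl s) i))"
      by (rule sum_mono) (rule pt)
    also have "\<dots> = (1 + K) * ((\<Sum>s\<in>S. X Alg n s i) + (\<Sum>s\<in>S. X Alg n (fl s) i))"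
      by (rule sumlem)
    also have "\<dots> = 2 * ((1 + K) * (\<Sum>s\<in>S. X Alg n s i))" unfolding re by simp
    finally have "real (card S) * (1 - c) \<le> (1 + K) * (\<Sum>s\<in>S. X Alg n s i)" by (rule halfl)
    then have "real (card S) * (1 - c) / (1 + K) \<le> (\<Sum>s\<in>S. X Alg n s i)"
      using Kpos by (simp add: divide_le_eq mult.commute)
    then show ?thesis unfolding B_def by simp
  qed
  have "real (card S) * (real n * B) = (\<Sum>i<n. real (card S) * B)" by simp
  also have "\<dots> \<le> (\<Sum>i<n. \<Sum>s\<in>S. X Alg n s i)" by (rule sum_mono) (use per_i in simp)
  also have "\<dots> = (\<Sum>s\<in>S. \<Sum>i<n. X Alg n s i)" by (rule sum.swap)
  finally have tot: "real (card S) * (real n * B) \<le> (\<Sum>s\<in>S. \<Sum>i<n. X Alg n s i)" .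
  show ?thesis
  proof (rule ccontr)
    assume "\<not> ?thesis"
    then have lt: "(\<Sum>i<n. X Alg n s i) < real n * B" for s unfolding B_def c_def K_def by (meson not_le)
    have "(\<Sum>s\<in>S. \<Sum>i<n. X Alg n s i) < (\<Sum>s\<in>S. real n * B)"
      by (rule sum_strict_mono[OF fS neS]) (rule lt)
    also have "\<dots> = real (card S) * (real n * B)" by simp
    finally show False using tot by simp
  qed
qed


lemma mw_zero: "matching_weight (W (D n s)) (Ms n s) = 0"
proof -
  have "W (D n s) e = 0" if "e \<in> Ms n s" for e
  proof -
    have "e \<notin> D n s"
    proof
      assume "e \<in> D n s"
      then obtain j where j: "j < n" "e = ed j (s j)" unfolding D_def by auto
      then show False using ed_notin_Ms[OF j(1), of s] that by simp
    qed
    then show ?thesis unfolding W_def by simp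
  qed
  then show ?thesis unfolding matching_weight_def by simp
qed

lemma min_le:
  "Min {matching_weight (W (D n s)) M | M. perfect_matching {..<4*n} (GE n) M} \<le> 0"
proof -
  let ?A = "{matching_weight (W (D n s)) M | M. perfect_matching {..<4*n} (GE n) M}"
  have "?A \<subseteq> matching_weight (W (D n s)) ` Pow (GE n)"
  proof
    fix x assume "x \<in> ?A"
    then obtain M where M: "x = matching_weight (W (D n s)) M" "perfect_matching {..<4*n} (GE n) M" by blast
    then have "M \<in> Pow (GE n)" unfolding perfect_matching_def matching_def by simp
    then show "x \<in> matching_weight (W (D n s)) ` Pow (GE n)" using M(1) by (rule rev_image_eqI)
  qed
  moreover have "finite (matching_weight (W (D n s)) ` Pow (GE n))"
    by (rule finite_imageI) (simp add: GE_finite)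
  ultimately have fin: "finite ?A" by (rule finite_subset)
  have "matching_weight (W (D n s)) (Ms n s) \<in> ?A"
    by (rule CollectI, rule exI[of _ "Ms n s"]) (simp add: Ms_pm)
  then have "0 \<in> ?A" unfolding mw_zero .
  then show ?thesis using Min_le[OF fin] by blast
qed

lemma part1:
  fixes n :: nat
  shows "\<exists>E :: nat set set.
          simple_graph {..<4*n} E \<and>
          (\<exists>M. perfect_matching {..<4*n} E M) \<and>
          (\<forall>(eps::real) (delta::real) (A :: (nat set \<Rightarrow> real) \<Rightarrow> nat set set pmf).
             0 \<le> eps \<longrightarrow> 0 \<le> delta \<longrightarrow>
             dp_on E eps delta A \<longrightarrow>
             (\<forall>w. weight_fun E w \<longrightarrow> set_pmf (A w) \<subseteq> {M. perfect_matching {..<4*n} E M}) \<longrightarrow>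
             (\<exists>w. weight_fun E w \<and> (\<forall>e\<in>E. w e \<in> {0, 1}) \<and>
                measure_pmf.expectation (A w) (matching_weight w)
                  \<ge> Min {matching_weight w M | M. perfect_matching {..<4*n} E M}
                    + real (4*n) / 4 * ((1 - (1 + exp eps) * delta) / (1 + exp (2*eps)))))"
proof (rule exI[of _ "GE n"], intro conjI allI impI)
  show "simple_graph {..<4*n} (GE n)" by (rule GE_simple)
  show "\<exists>M. perfect_matching {..<4*n} (GE n) M" using Ms_pm by blast
  fix eps delta :: real and Alg :: "(nat set \<Rightarrow> real) \<Rightarrow> nat set set pmf"
  assume "0 \<le> eps" "0 \<le> delta" and dp: "dp_on (GE n) eps delta Alg"
    and supp: "\<forall>w. weight_fun (GE n) w \<longrightarrow> set_pmf (Alg w) \<subseteq> {M. perfect_matching {..<4*n} (GE n) M}"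
  obtain s where s: "(\<Sum>i<n. X Alg n s i) \<ge> real n * ((1 - (1 + exp eps) * delta) / (1 + exp (2*eps)))"
    using avg[OF dp supp] by blast
  define w where "w = W (D n s)"
  have wf: "weight_fun (GE n) w" unfolding w_def by (rule wfW[OF D_sub])
  have sp: "set_pmf (Alg w) \<subseteq> {M. perfect_matching {..<4*n} (GE n) M}" using supp wf by blast
  have ex: "measure_pmf.expectation (Alg w) (matching_weight w) = (\<Sum>i<n. X Alg n s i)"
    using expect_eq[OF sp[unfolded w_def], of s] unfolding w_def X_def by simp
  have mn: "Min {matching_weight w M | M. perfect_matching {..<4*n} (GE n) M} \<le> 0"
    unfolding w_def by (rule min_le)
  have r: "real (4*n) / 4 = real n" by simp
  show "\<exists>w. weight_fun (GE n) w \<and> (\<forall>e\<in>GE n. w e \<in> {0, 1}) \<and>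
                measure_pmf.expectation (Alg w) (matching_weight w)
                  \<ge> Min {matching_weight w M | M. perfect_matching {..<4*n} (GE n) M}
                    + real (4*n) / 4 * ((1 - (1 + exp eps) * delta) / (1 + exp (2*eps)))"
  proof (intro exI[of _ w] conjI ballI)
    show "weight_fun (GE n) w" by (rule wf)
    show "w e \<in> {0, 1}" for e unfolding w_def W_def by simp
    show "measure_pmf.expectation (Alg w) (matching_weight w)
                  \<ge> Min {matching_weight w M | M. perfect_matching {..<4*n} (GE n) M}
                    + real (4*n) / 4 * ((1 - (1 + exp eps) * delta) / (1 + exp (2*eps)))"
      unfolding ex r using s mn by linarith
  qed
qed

theorem theoremB4:
  fixes n :: nat
  assumes "n \<ge> 1"
  shows "(\<exists>E :: nat set set.
            simple_graph {..<4*n} E \<and>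
            (\<exists>M. perfect_matching {..<4*n} E M) \<and>
            (\<forall>(eps::real) (delta::real) (A :: (nat set \<Rightarrow> real) \<Rightarrow> nat set set pmf).
               0 \<le> eps \<longrightarrow> 0 \<le> delta \<longrightarrow>
               dp_on E eps delta A \<longrightarrow>
               (\<forall>w. weight_fun E w \<longrightarrow> set_pmf (A w) \<subseteq> {M. perfect_matching {..<4*n} E M}) \<longrightarrow>
               (\<exists>w. weight_fun E w \<and> (\<forall>e\<in>E. w e \<in> {0, 1}) \<and>
                  measure_pmf.expectation (A w) (matching_weight w)
                    \<ge> Min {matching_weight w M | M. perfect_matching {..<4*n} E M}
                      + real (4*n) / 4 * ((1 - (1 + exp eps) * delta) / (1 + exp (2*eps))))))
         \<and> (\<exists>eps0 > 0. \<exists>delta0 > 0. \<forall>(eps::real) (delta::real).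
               0 \<le> eps \<longrightarrow> eps < eps0 \<longrightarrow> 0 \<le> delta \<longrightarrow> delta < delta0 \<longrightarrow>
               real (4*n) / 4 * ((1 - (1 + exp eps) * delta) / (1 + exp (2*eps))) \<ge> 0.12 * real (4*n))"
  by (rule conjI[OF part1 part2])

end
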